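(* Let $\Lambda$ be a Kähler group, let $\rho:\Lambda\to\prod_{\alpha\in\mathfrak{U}}T_\alpha$ be its universal homomorphism, and let $\rho_{\mathrm{tf}}$ be its torsion-free universal homomorphism. Then $\ker(\rho)$ and $\ker(\rho_{\mathrm{tf}})$ are characteristic subgroups of $\Lambda$.
   Context: A Kähler group is the fundamental group of a compact Kähler manifold. For a Kähler group $\Lambda$ there is a (possibly empty) finite collection of cocompact Fuchsian groups $\{T_\alpha\}_{\alpha\in\mathfrak{U}}$ and a homomorphism $\rho:\Lambda\to T=\prod_{\alpha\in\mathfrak{U}}T_\alpha$ (the universal homomorphism; the $T_\alpha$ are its direct factors) such that: (1) for each $\alpha$, with projection $p_\alpha:T\to T_\alpha$, the map $p_\alpha\circ\rho$ is surjective; (2) every surjective homomorphism from $\Lambda$ onto a cocompact Fuchsian group factors through some $p_\alpha\circ\rho$; (3) a surjective homomorphism $\sigma:\Lambda\to T'$ onto a cocompact Fuchsian group has finitely generated kernel if and only if there exist $\alpha\in\mathfrak{U}$ and an isomorphism $\psi:T_\alpha\to T'$ with $\sigma=\psi\circ p_\alpha\circ\rho$. (If $\mathfrak{U}=\varnothing$, $\rho$ is the trivial map to the trivial group.) Let $\mathfrak{U}_{\mathrm{tf}}\subseteq\mathfrak{U}$ be the set of $\alpha$ for which $T_\alpha$ is torsion-free (i.e., a surface group of genus $\ge2$); the torsion-free universal homomorphism is $\rho_{\mathrm{tf}}:\Lambda\to\prod_{\alpha\in\mathfrak{U}_{\mathrm{tf}}}T_\alpha$, the composition of $\rho$ with the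 projection onto these factors. *)

theory Defs
  imports "HOL-Analysis.Analysis" "HOL-Algebra.Algebra"
begin

definition SL2 :: "(real^2^2) set" where
  "SL2 = {A. det A = 1}"

definition psl_class :: "real^2^2 \<Rightarrow> (real^2^2) set" where
  "psl_class A = {A, - A}"

definition PSL2 :: "(real^2^2) set monoid" where
  "PSL2 = \<lparr> carrier = psl_class ` SL2,
            monoid.mult = (\<lambda>P Q. {matrix_matrix_mult a b | a b. a \<in> P \<and> b \<in> Q}),
            one = psl_class (mat 1) \<rparr>"

definition Fuchs :: "(real^2^2) set set \<Rightarrow> (real^2^2) set monoid" where
  "Fuchs \<Gamma> = PSL2\<lparr>carrier := \<Gamma>\<rparr>"

text \<open>Discrete: the preimage of the subgroup in SL(2,R) is a discrete subset.
  Cocompact: SL(2,R) = K \<cdot> (preimage) for some compact K, i.e. the quotient is compact.\<close>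
definition cocompact_fuchsian :: "(real^2^2) set set \<Rightarrow> bool" where
  "cocompact_fuchsian \<Gamma> \<longleftrightarrow>
     subgroup \<Gamma> PSL2 \<and>
     (\<forall>A\<in>\<Union>\<Gamma>. \<exists>e>0. ball A e \<inter> \<Union>\<Gamma> = {A}) \<and>
     (\<exists>K. compact K \<and> K \<subseteq> SL2 \<and> SL2 \<subseteq> {matrix_matrix_mult k g | k g. k \<in> K \<and> g \<in> \<Union>\<Gamma>})"

definition torsion_free :: "('a, 'b) monoid_scheme \<Rightarrow> bool" where
  "torsion_free G \<longleftrightarrow>
     (\<forall>x\<in>carrier G. \<forall>n::nat. n > 0 \<and> x [^]\<^bsub>G\<^esub> n = \<one>\<^bsub>G\<^esub> \<longrightarrow> x = \<one>\<^bsub>G\<^esub>)"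

definition finitely_generated_subgroup :: "('a, 'b) monoid_scheme \<Rightarrow> 'a set \<Rightarrow> bool" where
  "finitely_generated_subgroup G H \<longleftrightarrow> (\<exists>S. finite S \<and> S \<subseteq> H \<and> generate G S = H)"

definition characteristic_subgroup :: "('a, 'b) monoid_scheme \<Rightarrow> 'a set \<Rightarrow> bool" where
  "characteristic_subgroup G H \<longleftrightarrow> subgroup H G \<and> (\<forall>\<phi>\<in>iso G G. \<phi> ` H = H)"

definition target_group :: "'i set \<Rightarrow> ('i \<Rightarrow> (real^2^2) set set) \<Rightarrow> ('i \<Rightarrow> (real^2^2) set) monoid" where
  "target_group U T = product_group U (\<lambda>\<alpha>. Fuchs (T \<alpha>))"

definition universal_hom ::
  "('a, 'b) monoid_scheme \<Rightarrow> 'i set \<Rightarrow> ('i \<Rightarrow> (real^2^2) set set) \<Rightarrow> ('a \<Rightarrow> 'i \<Rightarrow> (real^2^2) set) \<Rightarrow> bool" where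
  "universal_hom G U T \<rho> \<longleftrightarrow>
     finite U \<and>
     (\<forall>\<alpha>\<in>U. cocompact_fuchsian (T \<alpha>)) \<and>
     \<rho> \<in> hom G (target_group U T) \<and>
     (\<forall>\<alpha>\<in>U. (\<lambda>x. \<rho> x \<alpha>) ` carrier G = T \<alpha>) \<and>
     (\<forall>\<Gamma> \<sigma>. cocompact_fuchsian \<Gamma> \<and> \<sigma> \<in> epi G (Fuchs \<Gamma>) \<longrightarrow>
        (\<exists>\<alpha>\<in>U. \<exists>h\<in>hom (Fuchs (T \<alpha>)) (Fuchs \<Gamma>). \<forall>x\<in>carrier G. \<sigma> x = h (\<rho> x \<alpha>))) \<and>
     (\<forall>\<Gamma> \<sigma>. cocompact_fuchsian \<Gamma> \<and> \<sigma> \<in> epi G (Fuchs \<Gamma>) \<longrightarrow>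
        (finitely_generated_subgroup G (kernel G (Fuchs \<Gamma>) \<sigma>) \<longleftrightarrow>
         (\<exists>\<alpha>\<in>U. \<exists>\<psi>\<in>iso (Fuchs (T \<alpha>)) (Fuchs \<Gamma>). \<forall>x\<in>carrier G. \<sigma> x = \<psi> (\<rho> x \<alpha>))))"

definition tf_index :: "'i set \<Rightarrow> ('i \<Rightarrow> (real^2^2) set set) \<Rightarrow> 'i set" where
  "tf_index U T = {\<alpha>\<in>U. torsion_free (Fuchs (T \<alpha>))}"

definition tf_hom :: "'i set \<Rightarrow> ('i \<Rightarrow> (real^2^2) set set) \<Rightarrow> ('a \<Rightarrow> 'i \<Rightarrow> (real^2^2) set) \<Rightarrow> 'a \<Rightarrow> 'i \<Rightarrow> (real^2^2) set" where
  "tf_hom U T \<rho> = (\<lambda>x. restrict (\<rho> x) (tf_index U T))"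

end

theory Submission
  imports Defs
begin
lemma mm_lneg: "(- A) ** (B::real^2^2) = - (A ** B)"
  by (simp add: matrix_matrix_mult_def vec_eq_iff sum_negf)
lemma mm_rneg: "A ** (- B::real^2^2) = - (A ** B)"
  by (simp add: matrix_matrix_mult_def vec_eq_iff sum_negf)
lemma psl_mult: "monoid.mult PSL2 (psl_class A) (psl_class B) = psl_class (A ** B)"
  unfolding PSL2_def psl_class_def by (auto simp: mm_lneg mm_rneg) (metis mm_lneg)
lemma group_PSL2: "group PSL2"
proof (rule groupI)
  show "\<one>\<^bsub>PSL2\<^esub> \<in> carrier PSL2" by (simp add: PSL2_def SL2_def)
next
  fix x y assume "x \<in> carrier PSL2" "y \<in> carrier PSL2"
  then obtain A B where "x = psl_class A" "y = psl_class B" "det A = 1" "det B = 1"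
    by (auto simp: PSL2_def SL2_def)
  then show "x \<otimes>\<^bsub>PSL2\<^esub> y \<in> carrier PSL2"
    by (simp add: psl_mult) (simp add: PSL2_def SL2_def det_mul)
next
  fix x y z assume "x \<in> carrier PSL2" "y \<in> carrier PSL2" "z \<in> carrier PSL2"
  then obtain A B C where "x = psl_class A" "y = psl_class B" "z = psl_class C"
    by (auto simp: PSL2_def SL2_def)
  then show "x \<otimes>\<^bsub>PSL2\<^esub> y \<otimes>\<^bsub>PSL2\<^esub> z = x \<otimes>\<^bsub>PSL2\<^esub> (y \<otimes>\<^bsub>PSL2\<^esub> z)"
    by (simp add: psl_mult matrix_mul_assoc)
next
  fix x assume "x \<in> carrier PSL2"
  then obtain A where "x = psl_class A" by (auto simp: PSL2_def SL2_def)
  then show "\<one>\<^bsub>PSL2\<^esub> \<otimes>\<^bsub>PSL2\<^esub> x = x"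
    using psl_mult[of "mat 1" A] by (simp add: PSL2_def)
next
  fix x assume "x \<in> carrier PSL2"
  then obtain A where A: "x = psl_class A" "det A = 1" by (auto simp: PSL2_def SL2_def)
  then have inv: "invertible A" by (simp add: invertible_det_nz)
  then obtain A' where 1: "A' ** A = mat 1" unfolding invertible_def by blast
  then have "det A' = 1" using det_mul[of A' A] A by simp
  then have "psl_class A' \<in> carrier PSL2" by (simp add: PSL2_def SL2_def)
  moreover have "psl_class A' \<otimes>\<^bsub>PSL2\<^esub> x = \<one>\<^bsub>PSL2\<^esub>"
    using A 1 by (simp add: psl_mult) (simp add: PSL2_def)
  ultimately show "\<exists>y\<in>carrier PSL2. y \<otimes>\<^bsub>PSL2\<^esub> x = \<one>\<^bsub>PSL2\<^esub>" by blast
qed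
lemma group_Fuchs: "cocompact_fuchsian \<Gamma> \<Longrightarrow> group (Fuchs \<Gamma>)"
  unfolding cocompact_fuchsian_def Fuchs_def
  using group_PSL2 subgroup.subgroup_is_group by blast
lemma one_Fuchs[simp]: "\<one>\<^bsub>Fuchs \<Gamma>\<^esub> = psl_class (mat 1)"
  by (simp add: Fuchs_def PSL2_def)

lemma carrier_Fuchs[simp]: "carrier (Fuchs \<Gamma>) = \<Gamma>"
  by (simp add: Fuchs_def)

lemma iso_bij: "\<phi> \<in> iso G H \<Longrightarrow> bij_betw \<phi> (carrier G) (carrier H)"
  by (simp add: iso_def)

lemma uh_fin:
  assumes "universal_hom G U T \<rho>"
  shows "finite U"
  using assms unfolding universal_hom_def by (elim conjE)

lemma uh_cc:
  assumes "universal_hom G U T \<rho>"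
  shows "\<forall>\<alpha>\<in>U. cocompact_fuchsian (T \<alpha>)"
  using assms unfolding universal_hom_def by (elim conjE)

lemma uh_hom:
  assumes "universal_hom G U T \<rho>"
  shows "\<rho> \<in> hom G (target_group U T)"
  using assms unfolding universal_hom_def by (elim conjE)

lemma uh_sur:
  assumes "universal_hom G U T \<rho>"
  shows "\<forall>\<alpha>\<in>U. (\<lambda>x. \<rho> x \<alpha>) ` carrier G = T \<alpha>"
  using assms unfolding universal_hom_def by (elim conjE)

lemma uh_u3:
  assumes "universal_hom G U T \<rho>"
  shows "\<forall>\<Gamma> \<sigma>. cocompact_fuchsian \<Gamma> \<and> \<sigma> \<in> epi G (Fuchs \<Gamma>) \<longrightarrow>
        (finitely_generated_subgroup G (kernel G (Fuchs \<Gamma>) \<sigma>) \<longleftrightarrow>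
         (\<exists>\<alpha>\<in>U. \<exists>\<psi>\<in>iso (Fuchs (T \<alpha>)) (Fuchs \<Gamma>). \<forall>x\<in>carrier G. \<sigma> x = \<psi> (\<rho> x \<alpha>)))"
  using assms unfolding universal_hom_def by (elim conjE)

lemma key:
  assumes G: "group G" and u: "universal_hom G U T \<rho>" and phi: "\<phi> \<in> iso G G" and a: "\<alpha> \<in> U"
  shows "\<exists>\<beta>\<in>U. \<exists>\<psi>\<in>iso (Fuchs (T \<beta>)) (Fuchs (T \<alpha>)). \<forall>x\<in>carrier G. \<rho> (\<phi> x) \<alpha> = \<psi> (\<rho> x \<beta>)"
proof -
  interpret G: group G by (rule G)
  have cc: "cocompact_fuchsian (T \<alpha>)" using uh_cc[OF u] a by blast
  have hom: "\<rho> \<in> hom G (target_group U T)" using uh_hom[OF u] .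
  have sur: "(\<lambda>x. \<rho> x \<alpha>) ` carrier G = T \<alpha>" using uh_sur[OF u] a by blast
  note u3 = uh_u3[OF u, rule_format, OF conjI]
  define \<sigma>0 where "\<sigma>0 = (\<lambda>x. \<rho> x \<alpha>)"
  have h0: "\<sigma>0 \<in> hom G (Fuchs (T \<alpha>))"
  proof (rule homI)
    fix x assume "x \<in> carrier G"
    then show "\<sigma>0 x \<in> carrier (Fuchs (T \<alpha>))" using sur by (auto simp: \<sigma>0_def)
  next
    fix x y assume "x \<in> carrier G" "y \<in> carrier G"
    then have "\<rho> (x \<otimes>\<^bsub>G\<^esub> y) = \<rho> x \<otimes>\<^bsub>target_group U T\<^esub> \<rho> y" using hom by (simp add: hom_mult)
    then show "\<sigma>0 (x \<otimes>\<^bsub>G\<^esub> y) = \<sigma>0 x \<otimes>\<^bsub>Fuchs (T \<alpha>)\<^esub> \<sigma>0 y"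
      using a by (simp add: \<sigma>0_def target_group_def)
  qed
  have e0: "\<sigma>0 \<in> epi G (Fuchs (T \<alpha>))" using h0 sur by (simp add: epi_def \<sigma>0_def)
  have ex0: "\<exists>\<alpha>'\<in>U. \<exists>\<psi>\<in>iso (Fuchs (T \<alpha>')) (Fuchs (T \<alpha>)). \<forall>x\<in>carrier G. \<sigma>0 x = \<psi> (\<rho> x \<alpha>')"
    apply (rule bexI[OF _ a])
    apply (rule bexI[OF _ iso_set_refl])
    by (simp add: \<sigma>0_def)
  have "finitely_generated_subgroup G (kernel G (Fuchs (T \<alpha>)) \<sigma>0)"
    using u3[OF cc e0] ex0 by (rule iffD2)
  then obtain S where S: "finite S" "S \<subseteq> kernel G (Fuchs (T \<alpha>)) \<sigma>0"
    "generate G S = kernel G (Fuchs (T \<alpha>)) \<sigma>0"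
    unfolding finitely_generated_subgroup_def by blast
  have bij: "bij_betw \<phi> (carrier G) (carrier G)" using phi by (rule iso_bij)
  define \<phi>' where "\<phi>' = inv_into (carrier G) \<phi>"
  have phi': "\<phi>' \<in> iso G G" unfolding \<phi>'_def using G.iso_set_sym[OF phi] .
  have hphi: "\<phi> \<in> hom G G" "\<phi>' \<in> hom G G" using phi phi' by (auto simp: iso_def)
  have ghom': "group_hom G G \<phi>'" using hphi(2) G by (simp add: group_hom_def group_hom_axioms_def)
  define \<sigma> where "\<sigma> = (\<lambda>x. \<sigma>0 (\<phi> x))"
  have hs: "\<sigma> \<in> hom G (Fuchs (T \<alpha>))"
    using hom_compose[OF hphi(1) h0] by (simp add: \<sigma>_def comp_def)
  have img: "\<phi> ` carrier G = carrier G" using bij by (simp add: bij_betw_def)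
  have "\<sigma> ` carrier G = \<sigma>0 ` (\<phi> ` carrier G)" unfolding \<sigma>_def by (rule image_image[symmetric])
  then have "\<sigma> ` carrier G = carrier (Fuchs (T \<alpha>))" using img e0 by (simp add: epi_def)
  then have es: "\<sigma> \<in> epi G (Fuchs (T \<alpha>))" using hs by (simp add: epi_def)
  have kk: "kernel G (Fuchs (T \<alpha>)) \<sigma> = \<phi>' ` kernel G (Fuchs (T \<alpha>)) \<sigma>0"
  proof
    show "kernel G (Fuchs (T \<alpha>)) \<sigma> \<subseteq> \<phi>' ` kernel G (Fuchs (T \<alpha>)) \<sigma>0"
    proof
      fix x assume x: "x \<in> kernel G (Fuchs (T \<alpha>)) \<sigma>"
      then have "x \<in> carrier G" by (simp add: kernel_def)
      then have "\<phi> x \<in> carrier G" "\<phi>' (\<phi> x) = x" using bij img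
        by (auto simp: \<phi>'_def bij_betw_def inv_into_f_f)
      then show "x \<in> \<phi>' ` kernel G (Fuchs (T \<alpha>)) \<sigma>0" using x
        by (force simp: kernel_def \<sigma>_def)
    qed
  next
    show "\<phi>' ` kernel G (Fuchs (T \<alpha>)) \<sigma>0 \<subseteq> kernel G (Fuchs (T \<alpha>)) \<sigma>"
    proof
      fix x assume "x \<in> \<phi>' ` kernel G (Fuchs (T \<alpha>)) \<sigma>0"
      then obtain y where y: "y \<in> carrier G" "\<sigma>0 y = \<one>\<^bsub>Fuchs (T \<alpha>)\<^esub>" "x = \<phi>' y"
        by (auto simp: kernel_def)
      then have "\<phi>' y \<in> carrier G" "\<phi> (\<phi>' y) = y" using img
        by (auto simp: \<phi>'_def inv_into_into f_inv_into_f)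
      then show "x \<in> kernel G (Fuchs (T \<alpha>)) \<sigma>" using y by (simp add: kernel_def \<sigma>_def)
    qed
  qed
  have Sc: "S \<subseteq> carrier G" using S(2) by (auto simp: kernel_def)
  have "finitely_generated_subgroup G (kernel G (Fuchs (T \<alpha>)) \<sigma>)"
    unfolding finitely_generated_subgroup_def kk
    using S Sc group_hom.generate_img[OF ghom' Sc]
    by (intro exI[of _ "\<phi>' ` S"]) auto
  then obtain \<beta> \<psi> where "\<beta> \<in> U" "\<psi> \<in> iso (Fuchs (T \<beta>)) (Fuchs (T \<alpha>))"
     "\<forall>x\<in>carrier G. \<sigma> x = \<psi> (\<rho> x \<beta>)"
    using u3[OF cc es] by blast
  then show ?thesis by (auto simp: \<sigma>_def \<sigma>0_def)
qed

definition kerset :: "('a, 'b) monoid_scheme \<Rightarrow> 'i set \<Rightarrow> ('a \<Rightarrow> 'i \<Rightarrow> (real^2^2) set) \<Rightarrow> 'a set" where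
  "kerset G V \<rho> = {x\<in>carrier G. \<forall>\<alpha>\<in>V. \<rho> x \<alpha> = psl_class (mat 1)}"

lemma comp_hom:
  assumes G: "group G" and u: "universal_hom G U T \<rho>" and a: "\<alpha> \<in> U"
  shows "group_hom G (Fuchs (T \<alpha>)) (\<lambda>x. \<rho> x \<alpha>)"
proof -
  have cc: "cocompact_fuchsian (T \<alpha>)" and hom: "\<rho> \<in> hom G (target_group U T)"
    and sur: "(\<lambda>x. \<rho> x \<alpha>) ` carrier G = T \<alpha>"
    using uh_cc[OF u] uh_hom[OF u] uh_sur[OF u] a by blast+
  have "(\<lambda>x. \<rho> x \<alpha>) \<in> hom G (Fuchs (T \<alpha>))"
  proof (rule homI)
    fix x assume "x \<in> carrier G"
    then show "\<rho> x \<alpha> \<in> carrier (Fuchs (T \<alpha>))" using sur by auto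
  next
    fix x y assume "x \<in> carrier G" "y \<in> carrier G"
    then have "\<rho> (x \<otimes>\<^bsub>G\<^esub> y) = \<rho> x \<otimes>\<^bsub>target_group U T\<^esub> \<rho> y" using hom by (simp add: hom_mult)
    then show "\<rho> (x \<otimes>\<^bsub>G\<^esub> y) \<alpha> = \<rho> x \<alpha> \<otimes>\<^bsub>Fuchs (T \<alpha>)\<^esub> \<rho> y \<alpha>"
      using a by (simp add: target_group_def)
  qed
  then show ?thesis using group_Fuchs[OF cc] G
    by (simp add: group_hom_def group_hom_axioms_def)
qed

lemma kerset_subgroup:
  assumes G: "group G" and u: "universal_hom G U T \<rho>" and V: "V \<subseteq> U"
  shows "subgroup (kerset G V \<rho>) G"
proof -
  interpret G: group G by (rule G)
  have gh: "\<And>\<alpha>. \<alpha> \<in> V \<Longrightarrow> group_hom G (Fuchs (T \<alpha>)) (\<lambda>x. \<rho> x \<alpha>)"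
    using comp_hom[OF G u] V by blast
  show ?thesis
  proof (rule G.subgroupI)
    show "kerset G V \<rho> \<subseteq> carrier G" by (auto simp: kerset_def)
    show "kerset G V \<rho> \<noteq> {}"
      using group_hom.hom_one[OF gh] by (auto simp: kerset_def intro!: exI[of _ "\<one>\<^bsub>G\<^esub>"])
  next
    fix x assume x: "x \<in> kerset G V \<rho>"
    have "\<rho> (inv\<^bsub>G\<^esub> x) \<alpha> = psl_class (mat 1)" if a: "\<alpha> \<in> V" for \<alpha>
    proof -
      interpret h: group_hom G "Fuchs (T \<alpha>)" "\<lambda>x. \<rho> x \<alpha>" using gh[OF a] .
      show ?thesis using x a h.hom_inv[of x] h.H.inv_one by (simp add: kerset_def)
    qed
    then show "inv\<^bsub>G\<^esub> x \<in> kerset G V \<rho>" using x by (simp add: kerset_def)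
  next
    fix x y assume x: "x \<in> kerset G V \<rho>" and y: "y \<in> kerset G V \<rho>"
    have "\<rho> (x \<otimes>\<^bsub>G\<^esub> y) \<alpha> = psl_class (mat 1)" if a: "\<alpha> \<in> V" for \<alpha>
    proof -
      interpret h: group_hom G "Fuchs (T \<alpha>)" "\<lambda>x. \<rho> x \<alpha>" using gh[OF a] .
      show ?thesis using x y a h.hom_mult[of x y] h.H.l_one[OF h.H.one_closed]
        by (simp add: kerset_def)
    qed
    then show "x \<otimes>\<^bsub>G\<^esub> y \<in> kerset G V \<rho>" using x y by (simp add: kerset_def)
  qed
qed

lemma kerset_char:
  assumes G: "group G" and u: "universal_hom G U T \<rho>" and V: "V \<subseteq> U"
    and cl: "\<And>\<alpha> \<beta> \<psi>. \<alpha> \<in> V \<Longrightarrow> \<beta> \<in> U \<Longrightarrow> \<psi> \<in> iso (Fuchs (T \<beta>)) (Fuchs (T \<alpha>)) \<Longrightarrow> \<beta> \<in> V"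
  shows "characteristic_subgroup G (kerset G V \<rho>)"
proof -
  interpret G: group G by (rule G)
  have sub: "\<phi> ` kerset G V \<rho> \<subseteq> kerset G V \<rho>" if phi: "\<phi> \<in> iso G G" for \<phi>
  proof
    fix y assume "y \<in> \<phi> ` kerset G V \<rho>"
    then obtain x where x: "x \<in> carrier G" "\<forall>\<alpha>\<in>V. \<rho> x \<alpha> = psl_class (mat 1)" "y = \<phi> x"
      by (auto simp: kerset_def)
    have "\<rho> (\<phi> x) \<alpha> = psl_class (mat 1)" if a: "\<alpha> \<in> V" for \<alpha>
    proof -
      obtain \<beta> \<psi> where b: "\<beta> \<in> U" "\<psi> \<in> iso (Fuchs (T \<beta>)) (Fuchs (T \<alpha>))"
        "\<forall>x\<in>carrier G. \<rho> (\<phi> x) \<alpha> = \<psi> (\<rho> x \<beta>)"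
        using key[OF G u phi, of \<alpha>] a V by blast
      have "\<beta> \<in> V" using cl[OF a b(1,2)] .
      have gb: "group (Fuchs (T \<beta>))" "group (Fuchs (T \<alpha>))"
        using uh_cc[OF u] b(1) a V group_Fuchs by blast+
      have "group_hom (Fuchs (T \<beta>)) (Fuchs (T \<alpha>)) \<psi>"
        using gb b(2) by (simp add: group_hom_def group_hom_axioms_def iso_def)
      then have "\<psi> (psl_class (mat 1)) = psl_class (mat 1)"
        using group_hom.hom_one by (metis one_Fuchs)
      then show ?thesis using b(3) x \<open>\<beta> \<in> V\<close> by simp
    qed
    moreover have "\<phi> x \<in> carrier G" using phi x(1) by (auto simp: iso_def hom_def)
    ultimately show "y \<in> kerset G V \<rho>" using x by (simp add: kerset_def)
  qed
  have "\<phi> ` kerset G V \<rho> = kerset G V \<rho>" if phi: "\<phi> \<in> iso G G" for \<phi>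
  proof
    show "\<phi> ` kerset G V \<rho> \<subseteq> kerset G V \<rho>" using sub[OF phi] .
    define \<phi>' where "\<phi>' = inv_into (carrier G) \<phi>"
    have phi': "\<phi>' \<in> iso G G" unfolding \<phi>'_def using G.iso_set_sym[OF phi] .
    have img: "\<phi> ` carrier G = carrier G" using iso_bij[OF phi] by (simp add: bij_betw_def)
    show "kerset G V \<rho> \<subseteq> \<phi> ` kerset G V \<rho>"
    proof
      fix k assume k: "k \<in> kerset G V \<rho>"
      then have "\<phi>' k \<in> kerset G V \<rho>" using sub[OF phi'] by blast
      moreover have "\<phi> (\<phi>' k) = k" using k img
        by (auto simp: kerset_def \<phi>'_def f_inv_into_f)
      ultimately show "k \<in> \<phi> ` kerset G V \<rho>" by (metis imageI)
    qed
  qed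
  then show ?thesis using kerset_subgroup[OF G u V] by (simp add: characteristic_subgroup_def)
qed

theorem lemma2p2:
  fixes G :: "('a, 'b) monoid_scheme"
    and U :: "'i set"
    and T :: "'i \<Rightarrow> (real^2^2) set set"
    and \<rho> :: "'a \<Rightarrow> 'i \<Rightarrow> (real^2^2) set"
  assumes "group G"
    and "universal_hom G U T \<rho>"
  shows "characteristic_subgroup G (kernel G (target_group U T) \<rho>) \<and>
         characteristic_subgroup G
           (kernel G (target_group (tf_index U T) T) (tf_hom U T \<rho>))"
proof -
  have hom: "\<rho> \<in> hom G (target_group U T)" using uh_hom[OF assms(2)] .
  have k1: "kernel G (target_group U T) \<rho> = kerset G U \<rho>"
  proof -
    have "\<rho> x = (\<lambda>i\<in>U. psl_class (mat 1)) \<longleftrightarrow> (\<forall>\<alpha>\<in>U. \<rho> x \<alpha> = psl_class (mat 1))"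
      if "x \<in> carrier G" for x
    proof -
      have "\<rho> x \<in> extensional U" using hom_in_carrier[OF hom that]
        by (simp add: target_group_def PiE_def)
      then show ?thesis by (auto simp: fun_eq_iff extensional_def)
    qed
    then show ?thesis by (auto simp: kernel_def kerset_def target_group_def)
  qed
  have k2: "kernel G (target_group (tf_index U T) T) (tf_hom U T \<rho>) = kerset G (tf_index U T) \<rho>"
    by (auto simp: kernel_def kerset_def target_group_def tf_hom_def fun_eq_iff restrict_def)
  have c1: "characteristic_subgroup G (kerset G U \<rho>)"
    by (rule kerset_char[OF assms]) auto
  have c2: "characteristic_subgroup G (kerset G (tf_index U T) \<rho>)"
  proof (rule kerset_char[OF assms])
    show "tf_index U T \<subseteq> U" by (auto simp: tf_index_def)
  next
    fix \<alpha> \<beta> \<psi> assume a: "\<alpha> \<in> tf_index U T" and b: "\<beta> \<in> U"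
      and psi: "\<psi> \<in> iso (Fuchs (T \<beta>)) (Fuchs (T \<alpha>))"
    have aU: "\<alpha> \<in> U" and tf: "torsion_free (Fuchs (T \<alpha>))" using a by (auto simp: tf_index_def)
    have gb: "group (Fuchs (T \<beta>))" "group (Fuchs (T \<alpha>))"
      using uh_cc[OF assms(2)] b aU group_Fuchs by blast+
    have gh: "group_hom (Fuchs (T \<beta>)) (Fuchs (T \<alpha>)) \<psi>"
      using gb psi by (simp add: group_hom_def group_hom_axioms_def iso_def)
    have inj: "inj_on \<psi> (T \<beta>)" using iso_bij[OF psi] by (simp add: bij_betw_def)
    have "torsion_free (Fuchs (T \<beta>))"
      unfolding torsion_free_def
    proof (intro ballI allI impI)
      fix x and n :: nat assume x: "x \<in> carrier (Fuchs (T \<beta>))"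
        and n: "0 < n \<and> x [^]\<^bsub>Fuchs (T \<beta>)\<^esub> n = \<one>\<^bsub>Fuchs (T \<beta>)\<^esub>"
      have "\<psi> x [^]\<^bsub>Fuchs (T \<alpha>)\<^esub> n = \<one>\<^bsub>Fuchs (T \<alpha>)\<^esub>"
        using group_hom.hom_nat_pow[OF gh x, of n] n group_hom.hom_one[OF gh] by simp
      moreover have "\<psi> x \<in> carrier (Fuchs (T \<alpha>))" using group_hom.hom_closed[OF gh x] .
      ultimately have "\<psi> x = \<one>\<^bsub>Fuchs (T \<alpha>)\<^esub>" using tf n unfolding torsion_free_def by blast
      then have "\<psi> x = \<psi> \<one>\<^bsub>Fuchs (T \<beta>)\<^esub>" using group_hom.hom_one[OF gh] by simp
      moreover have "\<one>\<^bsub>Fuchs (T \<beta>)\<^esub> \<in> T \<beta>" using monoid.one_closed[OF group.is_monoid[OF gb(1)]] by simp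
      ultimately show "x = \<one>\<^bsub>Fuchs (T \<beta>)\<^esub>" using inj x by (simp add: inj_on_def)
    qed
    then show "\<beta> \<in> tf_index U T" using b by (simp add: tf_index_def)
  qed
  show ?thesis using c1 c2 k1 k2 by simp
qed
end
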